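(* Let $A$ be an enriched matrix. If $A$ admits a suitable LR-ordering, then $A$ contains none of the following enriched matrices (all of whose rows are unlabeled and uncolored) as a subconfiguration: $M_0=\begin{pmatrix}1&0&1&1\\1&1&1&0\\0&1&1&1\end{pmatrix}$, $M_{II}(4)=\begin{pmatrix}0&1&1&1\\1&1&0&0\\0&1&1&0\\1&1&0&1\end{pmatrix}$, $M_V=\begin{pmatrix}1&1&0&0&0\\0&0&1&1&0\\1&1&1&1&0\\1&0&0&1&1\end{pmatrix}$, and $S_0(k)$ for any even $k\geq 4$, where $S_0(k)$ is the $(k+1)\times k$ $(0,1)$-matrix whose first row has a $1$ in every column, whose $(j+1)$-th row, for $j=1,\dots,k-1$, has $1$'s exactly in columns $j$ and $j+1$, and whose last row has $1$'s exactly in columns $1$ and $k$.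
   Context: Rows of a $(0,1)$-matrix are identified with the set of columns in which they have a $1$; a row is empty if it has no $1$. An enriched matrix is a $(0,1)$-matrix together with an assignment of labels and colors to some (possibly none) of its rows such that: each row is either unlabeled or labeled with one of L, R, LR (an LR-row, L-row, R-row is a row labeled LR, L, R respectively); each row is either uncolored or colored red or blue; the only rows that may be colored are those labeled L or R and the empty LR-rows; and all empty LR-rows are colored with the same color. A row is a non-LR-row if it is not an LR-row. An LR-ordering of an enriched matrix $A$ is a linear ordering $\Pi$ of its columns such that: (1) in $\Pi$ the $1$'s of every non-LR-row appear consecutively; (2) the $1$'s of every nonempty L-row start in the first column of $\Pi$, and the $1$'s of every nonempty R-row end in the last column of $\Pi$; (3) in $\Pi$ the $1$'s of the complement of every LR-row (obtained by interchanging $0$'s and $1$'s) appear consecutively. Blocks with respect to an LR-ordering $\Pi$: for each row labeled L or LR having a $1$ in the first column of $\Pi$, its L-block is the maximal set of consecutive columns of $\Pi$, starting in the first column, on which the row has a $1$; R-blocks are defined analogously for rows labeled R or LR having a $1$ in the last column of $\Pi$ (maximal set of consecutive columns ending in the last column on which the row has a $1$); for each unlabeled row, its U-block is the set of columns in which it has a $1$. An LR-ordering is suitable if: the L-blocks of those LR-rows with exactly two blocks are disjoint from every R-block; the R-blocks of those LR-rows with exactly two blocks are disjoint from every L-block; and for each LR-row and each U-block, the U-block has empty intersection with either the L-block or the R-block of that LR-row. For enriched matrices $A$ and $B$, $B$ is a subconfiguration of $A$ if $B$ equals some submatrix of $A$ up to permutations of rows and/or columns, with the labels and colors of the rows remaining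 the same. *)

theory Defs
  imports Main
begin

datatype label = LabL | LabR | LabLR
datatype color = Red | Blue

(* A row: set of columns where it has a 1, optional label, optional colour *)
type_synonym erow = "nat set \<times> label option \<times> color option"

(* An enriched matrix: number of columns (columns are 0..<ncols) and list of rows *)
record emat =
  ncols :: nat
  rows :: "erow list"

definition ones :: "erow \<Rightarrow> nat set" where "ones r = fst r"
definition lab :: "erow \<Rightarrow> label option" where "lab r = fst (snd r)"
definition col :: "erow \<Rightarrow> color option" where "col r = snd (snd r)"

definition enriched :: "emat \<Rightarrow> bool" where
  "enriched A \<longleftrightarrow>
     (\<forall>r\<in>set (rows A). ones r \<subseteq> {0..<ncols A}) \<and>
     (\<forall>r\<in>set (rows A). col r \<noteq> None \<longrightarrow>
         (lab r = Some LabL \<or> lab r = Some LabR \<or> (lab r = Some LabLR \<and> ones r = {}))) \<and>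
     (\<forall>r\<in>set (rows A). \<forall>s\<in>set (rows A).
         lab r = Some LabLR \<and> ones r = {} \<and> lab s = Some LabLR \<and> ones s = {} \<longrightarrow>
         col r \<noteq> None \<and> col r = col s)"

(* An ordering of the columns: p i is the column in position i (positions 0..<n) *)
definition positions :: "nat \<Rightarrow> (nat \<Rightarrow> nat) \<Rightarrow> nat set \<Rightarrow> nat set" where
  "positions n p S = {i. i < n \<and> p i \<in> S}"

definition consec :: "nat set \<Rightarrow> bool" where
  "consec P \<longleftrightarrow> (\<forall>i j k. i \<in> P \<and> k \<in> P \<and> i \<le> j \<and> j \<le> k \<longrightarrow> j \<in> P)"

definition LR_ordering :: "emat \<Rightarrow> (nat \<Rightarrow> nat) \<Rightarrow> bool" where
  "LR_ordering A p \<longleftrightarrow>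
     bij_betw p {0..<ncols A} {0..<ncols A} \<and>
     (\<forall>r\<in>set (rows A). lab r \<noteq> Some LabLR \<longrightarrow> consec (positions (ncols A) p (ones r))) \<and>
     (\<forall>r\<in>set (rows A). lab r = Some LabL \<and> ones r \<noteq> {} \<longrightarrow>
         0 \<in> positions (ncols A) p (ones r)) \<and>
     (\<forall>r\<in>set (rows A). lab r = Some LabR \<and> ones r \<noteq> {} \<longrightarrow>
         ncols A - 1 \<in> positions (ncols A) p (ones r)) \<and>
     (\<forall>r\<in>set (rows A). lab r = Some LabLR \<longrightarrow>
         consec (positions (ncols A) p ({0..<ncols A} - ones r)))"

definition Lblock :: "nat \<Rightarrow> (nat \<Rightarrow> nat) \<Rightarrow> nat set \<Rightarrow> nat set" where
  "Lblock n p S = p ` {i. i < n \<and> (\<forall>j\<le>i. p j \<in> S)}"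

definition Rblock :: "nat \<Rightarrow> (nat \<Rightarrow> nat) \<Rightarrow> nat set \<Rightarrow> nat set" where
  "Rblock n p S = p ` {i. i < n \<and> (\<forall>j. i \<le> j \<and> j < n \<longrightarrow> p j \<in> S)}"

(* an LR-row has exactly two blocks: 1 in first and last column, and not all columns are 1 *)
definition two_blocks :: "nat \<Rightarrow> (nat \<Rightarrow> nat) \<Rightarrow> nat set \<Rightarrow> bool" where
  "two_blocks n p S \<longleftrightarrow> 0 < n \<and> p 0 \<in> S \<and> p (n - 1) \<in> S \<and> \<not> {0..<n} \<subseteq> S"

definition suitable_LR_ordering :: "emat \<Rightarrow> (nat \<Rightarrow> nat) \<Rightarrow> bool" where
  "suitable_LR_ordering A p \<longleftrightarrow> LR_ordering A p \<and>
     (let n = ncols A in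
     (\<forall>r\<in>set (rows A). \<forall>s\<in>set (rows A).
        lab r = Some LabLR \<and> two_blocks n p (ones r) \<and> lab s \<in> {Some LabR, Some LabLR} \<longrightarrow>
        Lblock n p (ones r) \<inter> Rblock n p (ones s) = {}) \<and>
     (\<forall>r\<in>set (rows A). \<forall>s\<in>set (rows A).
        lab r = Some LabLR \<and> two_blocks n p (ones r) \<and> lab s \<in> {Some LabL, Some LabLR} \<longrightarrow>
        Rblock n p (ones r) \<inter> Lblock n p (ones s) = {}) \<and>
     (\<forall>r\<in>set (rows A). \<forall>u\<in>set (rows A).
        lab r = Some LabLR \<and> lab u = None \<longrightarrow>
        ones u \<inter> Lblock n p (ones r) = {} \<or> ones u \<inter> Rblock n p (ones r) = {}))"

definition subconf :: "emat \<Rightarrow> emat \<Rightarrow> bool" where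
  "subconf B A \<longleftrightarrow> (\<exists>f g.
      inj_on f {0..<length (rows B)} \<and> f ` {0..<length (rows B)} \<subseteq> {0..<length (rows A)} \<and>
      inj_on g {0..<ncols B} \<and> g ` {0..<ncols B} \<subseteq> {0..<ncols A} \<and>
      (\<forall>i<length (rows B).
         lab (rows B ! i) = lab (rows A ! f i) \<and> col (rows B ! i) = col (rows A ! f i) \<and>
         (\<forall>c<ncols B. c \<in> ones (rows B ! i) \<longleftrightarrow> g c \<in> ones (rows A ! f i))))"

definition of01 :: "nat \<Rightarrow> nat list list \<Rightarrow> emat" where
  "of01 k xss = \<lparr> ncols = k,
      rows = map (\<lambda>xs. ({j. j < length xs \<and> xs ! j = 1}, None, None)) xss \<rparr>"

definition M0 :: emat where
  "M0 = of01 4 [[1,0,1,1],[1,1,1,0],[0,1,1,1]]"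

definition MII4 :: emat where
  "MII4 = of01 4 [[0,1,1,1],[1,1,0,0],[0,1,1,0],[1,1,0,1]]"

definition MV :: emat where
  "MV = of01 5 [[1,1,0,0,0],[0,0,1,1,0],[1,1,1,1,0],[1,0,0,1,1]]"

(* S_0(k), 0-based columns: first row all ones, rows j (1<=j<=k-1) have ones in columns
   j-1, j, last row has ones in columns 0 and k-1 *)
definition S0 :: "nat \<Rightarrow> emat" where
  "S0 k = \<lparr> ncols = k,
     rows = [({0..<k}, None, None)] @ map (\<lambda>j. ({j - 1, j}, None, None)) [1..<k]
            @ [({0, k - 1}, None, None)] \<rparr>"

end

theory Submission
  imports Defs
begin

definition BT :: "emat \<Rightarrow> (nat \<Rightarrow> nat) \<Rightarrow> bool" where
  "BT B q \<longleftrightarrow> (\<forall>i<length (rows B). \<forall>a b c. a < ncols B \<longrightarrow> b < ncols B \<longrightarrow> c < ncols B \<longrightarrow>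
      a \<in> ones (rows B ! i) \<longrightarrow> c \<in> ones (rows B ! i) \<longrightarrow> q a < q b \<longrightarrow> q b < q c \<longrightarrow>
      b \<in> ones (rows B ! i))"

lemma transfer:
  assumes lr: "LR_ordering A p" and sc: "subconf B A"
    and nl: "\<forall>i<length (rows B). lab (rows B ! i) = None"
  shows "\<exists>q. inj_on q {0..<ncols B} \<and> BT B q"
proof -
  let ?n = "ncols A"
  from sc obtain f g where H: "inj_on f {0..<length (rows B)} \<and> f ` {0..<length (rows B)} \<subseteq> {0..<length (rows A)} \<and>
      inj_on g {0..<ncols B} \<and> g ` {0..<ncols B} \<subseteq> {0..<ncols A} \<and>
      (\<forall>i<length (rows B).
         lab (rows B ! i) = lab (rows A ! f i) \<and> col (rows B ! i) = col (rows A ! f i) \<and>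
         (\<forall>c<ncols B. c \<in> ones (rows B ! i) \<longleftrightarrow> g c \<in> ones (rows A ! f i)))"
    unfolding subconf_def by (elim exE) (rule that)
  have f2: "f ` {0..<length (rows B)} \<subseteq> {0..<length (rows A)}" using H by (elim conjE)
  have g1: "inj_on g {0..<ncols B}" using H by (elim conjE)
  have g2: "g ` {0..<ncols B} \<subseteq> {0..<ncols A}" using H by (elim conjE)
  have fg: "\<forall>i<length (rows B).
         lab (rows B ! i) = lab (rows A ! f i) \<and> col (rows B ! i) = col (rows A ! f i) \<and>
         (\<forall>c<ncols B. c \<in> ones (rows B ! i) \<longleftrightarrow> g c \<in> ones (rows A ! f i))" using H by (elim conjE)
  from lr have bij: "bij_betw p {0..<?n} {0..<?n}"
    and cons: "\<forall>r\<in>set (rows A). lab r \<noteq> Some LabLR \<longrightarrow> consec (positions ?n p (ones r))"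
    unfolding LR_ordering_def by blast+
  define pinv where "pinv = inv_into {0..<?n} p"
  have pinv1: "x < ?n \<Longrightarrow> pinv x < ?n \<and> p (pinv x) = x" for x
  proof -
    assume x: "x < ?n"
    have "x \<in> p ` {0..<?n}" using bij x unfolding bij_betw_def by auto
    then show ?thesis unfolding pinv_def
      by (metis atLeastLessThan_iff f_inv_into_f inv_into_into)
  qed
  have pinvinj: "inj_on pinv {0..<?n}"
    using bij unfolding pinv_def by (metis bij_betw_def bij_betw_inv_into)
  define q where "q = (\<lambda>c. pinv (g c))"
  have "inj_on q {0..<ncols B}"
  proof -
    have "inj_on pinv (g ` {0..<ncols B})" using pinvinj g2 inj_on_subset by blast
    then have "inj_on (pinv \<circ> g) {0..<ncols B}" using g1 comp_inj_on by blast
    then show ?thesis by (simp add: o_def q_def)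
  qed
  moreover have "BT B q"
    unfolding BT_def
  proof (intro allI impI)
    fix i a b c
    assume i: "i < length (rows B)" and a: "a < ncols B" and b: "b < ncols B" and c: "c < ncols B"
      and ai: "a \<in> ones (rows B ! i)" and ci: "c \<in> ones (rows B ! i)"
      and ab: "q a < q b" and bc: "q b < q c"
    let ?r = "rows A ! f i"
    have fi: "f i < length (rows A)" using f2 i by (auto simp: image_subset_iff)
    have rin: "?r \<in> set (rows A)" using fi by simp
    have labr: "lab ?r = None" using fg nl i by metis
    have cr: "consec (positions ?n p (ones ?r))" using cons rin labr by simp
    have ga: "g a < ?n" using g2 a by (auto simp: image_subset_iff)
    have gb: "g b < ?n" using g2 b by (auto simp: image_subset_iff)
    have gc: "g c < ?n" using g2 c by (auto simp: image_subset_iff)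
    have "q a \<in> positions ?n p (ones ?r)"
      using pinv1[OF ga] fg i a ai unfolding positions_def q_def by auto
    moreover have "q c \<in> positions ?n p (ones ?r)"
      using pinv1[OF gc] fg i c ci unfolding positions_def q_def by auto
    ultimately have "q b \<in> positions ?n p (ones ?r)"
      using cr ab bc unfolding consec_def by (meson less_imp_le)
    then have "g b \<in> ones ?r" using pinv1[OF gb] unfolding positions_def q_def by auto
    then show "b \<in> ones (rows B ! i)" using fg i b by blast
  qed
  ultimately show ?thesis by blast
qed

lemma neqc: "(a::nat) \<noteq> b \<Longrightarrow> (a < b \<Longrightarrow> \<not> b < a \<Longrightarrow> P) \<Longrightarrow> (b < a \<Longrightarrow> \<not> a < b \<Longrightarrow> P) \<Longrightarrow> P"
  by (metis linorder_neqE_nat less_asym)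

lemma no_M0:
  assumes inj: "inj_on q {0..<ncols M0}" and bt: "BT M0 q"
  shows False
proof -
  have bt': "\<And>i a b c. i < length (rows M0) \<Longrightarrow> a < ncols M0 \<Longrightarrow> b < ncols M0 \<Longrightarrow> c < ncols M0 \<Longrightarrow>
      a \<in> ones (rows M0 ! i) \<Longrightarrow> c \<in> ones (rows M0 ! i) \<Longrightarrow> b \<notin> ones (rows M0 ! i) \<Longrightarrow> \<not> (q a < q b \<and> q b < q c)"
    using bt unfolding BT_def by blast
  have d: "\<And>a b. a < ncols M0 \<Longrightarrow> b < ncols M0 \<Longrightarrow> a \<noteq> b \<Longrightarrow> q a \<noteq> q b"
    using inj unfolding inj_on_def by auto
  have h0: "\<not> (q 0 < q 1 \<and> q 1 < q 2)" by (rule bt'[of 0]) (simp_all add: M0_def of01_def ones_def)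
  have h1: "\<not> (q 0 < q 1 \<and> q 1 < q 3)" by (rule bt'[of 0]) (simp_all add: M0_def of01_def ones_def)
  have h2: "\<not> (q 2 < q 1 \<and> q 1 < q 0)" by (rule bt'[of 0]) (simp_all add: M0_def of01_def ones_def)
  have h3: "\<not> (q 2 < q 1 \<and> q 1 < q 3)" by (rule bt'[of 0]) (simp_all add: M0_def of01_def ones_def)
  have h4: "\<not> (q 3 < q 1 \<and> q 1 < q 0)" by (rule bt'[of 0]) (simp_all add: M0_def of01_def ones_def)
  have h5: "\<not> (q 3 < q 1 \<and> q 1 < q 2)" by (rule bt'[of 0]) (simp_all add: M0_def of01_def ones_def)
  have h6: "\<not> (q 0 < q 3 \<and> q 3 < q 1)" by (rule bt'[of 1]) (simp_all add: M0_def of01_def ones_def)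
  have h7: "\<not> (q 0 < q 3 \<and> q 3 < q 2)" by (rule bt'[of 1]) (simp_all add: M0_def of01_def ones_def)
  have h8: "\<not> (q 1 < q 3 \<and> q 3 < q 0)" by (rule bt'[of 1]) (simp_all add: M0_def of01_def ones_def)
  have h9: "\<not> (q 1 < q 3 \<and> q 3 < q 2)" by (rule bt'[of 1]) (simp_all add: M0_def of01_def ones_def)
  have h10: "\<not> (q 2 < q 3 \<and> q 3 < q 0)" by (rule bt'[of 1]) (simp_all add: M0_def of01_def ones_def)
  have h11: "\<not> (q 2 < q 3 \<and> q 3 < q 1)" by (rule bt'[of 1]) (simp_all add: M0_def of01_def ones_def)
  have h12: "\<not> (q 1 < q 0 \<and> q 0 < q 2)" by (rule bt'[of 2]) (simp_all add: M0_def of01_def ones_def)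
  have h13: "\<not> (q 1 < q 0 \<and> q 0 < q 3)" by (rule bt'[of 2]) (simp_all add: M0_def of01_def ones_def)
  have h14: "\<not> (q 2 < q 0 \<and> q 0 < q 1)" by (rule bt'[of 2]) (simp_all add: M0_def of01_def ones_def)
  have h15: "\<not> (q 2 < q 0 \<and> q 0 < q 3)" by (rule bt'[of 2]) (simp_all add: M0_def of01_def ones_def)
  have h16: "\<not> (q 3 < q 0 \<and> q 0 < q 1)" by (rule bt'[of 2]) (simp_all add: M0_def of01_def ones_def)
  have h17: "\<not> (q 3 < q 0 \<and> q 0 < q 2)" by (rule bt'[of 2]) (simp_all add: M0_def of01_def ones_def)
  have d0: "q 0 \<noteq> q 1" by (rule d) (simp_all add: M0_def of01_def)
  have d1: "q 0 \<noteq> q 2" by (rule d) (simp_all add: M0_def of01_def)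
  have d2: "q 0 \<noteq> q 3" by (rule d) (simp_all add: M0_def of01_def)
  have d3: "q 1 \<noteq> q 2" by (rule d) (simp_all add: M0_def of01_def)
  have d4: "q 1 \<noteq> q 3" by (rule d) (simp_all add: M0_def of01_def)
  have d5: "q 2 \<noteq> q 3" by (rule d) (simp_all add: M0_def of01_def)
  show False
    apply (insert h0 h1 h2 h3 h4 h5 h6 h7 h8 h9 h10 h11 h12 h13 h14 h15 h16 h17)
    apply (rule neqc[OF d0]; rule neqc[OF d1]; rule neqc[OF d2]; rule neqc[OF d3]; rule neqc[OF d4]; rule neqc[OF d5])
    apply (blast | linarith)+
    done
qed

lemma no_MII4:
  assumes inj: "inj_on q {0..<ncols MII4}" and bt: "BT MII4 q"
  shows False
proof -
  have bt': "\<And>i a b c. i < length (rows MII4) \<Longrightarrow> a < ncols MII4 \<Longrightarrow> b < ncols MII4 \<Longrightarrow> c < ncols MII4 \<Longrightarrow>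
      a \<in> ones (rows MII4 ! i) \<Longrightarrow> c \<in> ones (rows MII4 ! i) \<Longrightarrow> b \<notin> ones (rows MII4 ! i) \<Longrightarrow> \<not> (q a < q b \<and> q b < q c)"
    using bt unfolding BT_def by blast
  have d: "\<And>a b. a < ncols MII4 \<Longrightarrow> b < ncols MII4 \<Longrightarrow> a \<noteq> b \<Longrightarrow> q a \<noteq> q b"
    using inj unfolding inj_on_def by auto
  have h0: "\<not> (q 1 < q 0 \<and> q 0 < q 2)" by (rule bt'[of 0]) (simp_all add: MII4_def of01_def ones_def)
  have h1: "\<not> (q 1 < q 0 \<and> q 0 < q 3)" by (rule bt'[of 0]) (simp_all add: MII4_def of01_def ones_def)
  have h2: "\<not> (q 2 < q 0 \<and> q 0 < q 1)" by (rule bt'[of 0]) (simp_all add: MII4_def of01_def ones_def)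
  have h3: "\<not> (q 2 < q 0 \<and> q 0 < q 3)" by (rule bt'[of 0]) (simp_all add: MII4_def of01_def ones_def)
  have h4: "\<not> (q 3 < q 0 \<and> q 0 < q 1)" by (rule bt'[of 0]) (simp_all add: MII4_def of01_def ones_def)
  have h5: "\<not> (q 3 < q 0 \<and> q 0 < q 2)" by (rule bt'[of 0]) (simp_all add: MII4_def of01_def ones_def)
  have h6: "\<not> (q 0 < q 2 \<and> q 2 < q 1)" by (rule bt'[of 1]) (simp_all add: MII4_def of01_def ones_def)
  have h7: "\<not> (q 0 < q 3 \<and> q 3 < q 1)" by (rule bt'[of 1]) (simp_all add: MII4_def of01_def ones_def)
  have h8: "\<not> (q 1 < q 2 \<and> q 2 < q 0)" by (rule bt'[of 1]) (simp_all add: MII4_def of01_def ones_def)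
  have h9: "\<not> (q 1 < q 3 \<and> q 3 < q 0)" by (rule bt'[of 1]) (simp_all add: MII4_def of01_def ones_def)
  have h10: "\<not> (q 1 < q 0 \<and> q 0 < q 2)" by (rule bt'[of 2]) (simp_all add: MII4_def of01_def ones_def)
  have h11: "\<not> (q 1 < q 3 \<and> q 3 < q 2)" by (rule bt'[of 2]) (simp_all add: MII4_def of01_def ones_def)
  have h12: "\<not> (q 2 < q 0 \<and> q 0 < q 1)" by (rule bt'[of 2]) (simp_all add: MII4_def of01_def ones_def)
  have h13: "\<not> (q 2 < q 3 \<and> q 3 < q 1)" by (rule bt'[of 2]) (simp_all add: MII4_def of01_def ones_def)
  have h14: "\<not> (q 0 < q 2 \<and> q 2 < q 1)" by (rule bt'[of 3]) (simp_all add: MII4_def of01_def ones_def)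
  have h15: "\<not> (q 0 < q 2 \<and> q 2 < q 3)" by (rule bt'[of 3]) (simp_all add: MII4_def of01_def ones_def)
  have h16: "\<not> (q 1 < q 2 \<and> q 2 < q 0)" by (rule bt'[of 3]) (simp_all add: MII4_def of01_def ones_def)
  have h17: "\<not> (q 1 < q 2 \<and> q 2 < q 3)" by (rule bt'[of 3]) (simp_all add: MII4_def of01_def ones_def)
  have h18: "\<not> (q 3 < q 2 \<and> q 2 < q 0)" by (rule bt'[of 3]) (simp_all add: MII4_def of01_def ones_def)
  have h19: "\<not> (q 3 < q 2 \<and> q 2 < q 1)" by (rule bt'[of 3]) (simp_all add: MII4_def of01_def ones_def)
  have d0: "q 0 \<noteq> q 1" by (rule d) (simp_all add: MII4_def of01_def)
  have d1: "q 0 \<noteq> q 2" by (rule d) (simp_all add: MII4_def of01_def)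
  have d2: "q 0 \<noteq> q 3" by (rule d) (simp_all add: MII4_def of01_def)
  have d3: "q 1 \<noteq> q 2" by (rule d) (simp_all add: MII4_def of01_def)
  have d4: "q 1 \<noteq> q 3" by (rule d) (simp_all add: MII4_def of01_def)
  have d5: "q 2 \<noteq> q 3" by (rule d) (simp_all add: MII4_def of01_def)
  show False
    apply (insert h0 h1 h2 h3 h4 h5 h6 h7 h8 h9 h10 h11 h12 h13 h14 h15 h16 h17 h18 h19)
    apply (rule neqc[OF d0]; rule neqc[OF d1]; rule neqc[OF d2]; rule neqc[OF d3]; rule neqc[OF d4]; rule neqc[OF d5])
    apply (blast | linarith)+
    done
qed

lemma no_MV:
  assumes inj: "inj_on q {0..<ncols MV}" and bt: "BT MV q"
  shows False
proof -
  have bt': "\<And>i a b c. i < length (rows MV) \<Longrightarrow> a < ncols MV \<Longrightarrow> b < ncols MV \<Longrightarrow> c < ncols MV \<Longrightarrow>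
      a \<in> ones (rows MV ! i) \<Longrightarrow> c \<in> ones (rows MV ! i) \<Longrightarrow> b \<notin> ones (rows MV ! i) \<Longrightarrow> \<not> (q a < q b \<and> q b < q c)"
    using bt unfolding BT_def by blast
  have d: "\<And>a b. a < ncols MV \<Longrightarrow> b < ncols MV \<Longrightarrow> a \<noteq> b \<Longrightarrow> q a \<noteq> q b"
    using inj unfolding inj_on_def by auto
  have h0: "\<not> (q 0 < q 2 \<and> q 2 < q 1)" by (rule bt'[of 0]) (simp_all add: MV_def of01_def ones_def)
  have h1: "\<not> (q 0 < q 3 \<and> q 3 < q 1)" by (rule bt'[of 0]) (simp_all add: MV_def of01_def ones_def)
  have h2: "\<not> (q 0 < q 4 \<and> q 4 < q 1)" by (rule bt'[of 0]) (simp_all add: MV_def of01_def ones_def)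
  have h3: "\<not> (q 1 < q 2 \<and> q 2 < q 0)" by (rule bt'[of 0]) (simp_all add: MV_def of01_def ones_def)
  have h4: "\<not> (q 1 < q 3 \<and> q 3 < q 0)" by (rule bt'[of 0]) (simp_all add: MV_def of01_def ones_def)
  have h5: "\<not> (q 1 < q 4 \<and> q 4 < q 0)" by (rule bt'[of 0]) (simp_all add: MV_def of01_def ones_def)
  have h6: "\<not> (q 2 < q 0 \<and> q 0 < q 3)" by (rule bt'[of 1]) (simp_all add: MV_def of01_def ones_def)
  have h7: "\<not> (q 2 < q 1 \<and> q 1 < q 3)" by (rule bt'[of 1]) (simp_all add: MV_def of01_def ones_def)
  have h8: "\<not> (q 2 < q 4 \<and> q 4 < q 3)" by (rule bt'[of 1]) (simp_all add: MV_def of01_def ones_def)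
  have h9: "\<not> (q 3 < q 0 \<and> q 0 < q 2)" by (rule bt'[of 1]) (simp_all add: MV_def of01_def ones_def)
  have h10: "\<not> (q 3 < q 1 \<and> q 1 < q 2)" by (rule bt'[of 1]) (simp_all add: MV_def of01_def ones_def)
  have h11: "\<not> (q 3 < q 4 \<and> q 4 < q 2)" by (rule bt'[of 1]) (simp_all add: MV_def of01_def ones_def)
  have h12: "\<not> (q 0 < q 4 \<and> q 4 < q 1)" by (rule bt'[of 2]) (simp_all add: MV_def of01_def ones_def)
  have h13: "\<not> (q 0 < q 4 \<and> q 4 < q 2)" by (rule bt'[of 2]) (simp_all add: MV_def of01_def ones_def)
  have h14: "\<not> (q 0 < q 4 \<and> q 4 < q 3)" by (rule bt'[of 2]) (simp_all add: MV_def of01_def ones_def)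
  have h15: "\<not> (q 1 < q 4 \<and> q 4 < q 0)" by (rule bt'[of 2]) (simp_all add: MV_def of01_def ones_def)
  have h16: "\<not> (q 1 < q 4 \<and> q 4 < q 2)" by (rule bt'[of 2]) (simp_all add: MV_def of01_def ones_def)
  have h17: "\<not> (q 1 < q 4 \<and> q 4 < q 3)" by (rule bt'[of 2]) (simp_all add: MV_def of01_def ones_def)
  have h18: "\<not> (q 2 < q 4 \<and> q 4 < q 0)" by (rule bt'[of 2]) (simp_all add: MV_def of01_def ones_def)
  have h19: "\<not> (q 2 < q 4 \<and> q 4 < q 1)" by (rule bt'[of 2]) (simp_all add: MV_def of01_def ones_def)
  have h20: "\<not> (q 2 < q 4 \<and> q 4 < q 3)" by (rule bt'[of 2]) (simp_all add: MV_def of01_def ones_def)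
  have h21: "\<not> (q 3 < q 4 \<and> q 4 < q 0)" by (rule bt'[of 2]) (simp_all add: MV_def of01_def ones_def)
  have h22: "\<not> (q 3 < q 4 \<and> q 4 < q 1)" by (rule bt'[of 2]) (simp_all add: MV_def of01_def ones_def)
  have h23: "\<not> (q 3 < q 4 \<and> q 4 < q 2)" by (rule bt'[of 2]) (simp_all add: MV_def of01_def ones_def)
  have h24: "\<not> (q 0 < q 1 \<and> q 1 < q 3)" by (rule bt'[of 3]) (simp_all add: MV_def of01_def ones_def)
  have h25: "\<not> (q 0 < q 2 \<and> q 2 < q 3)" by (rule bt'[of 3]) (simp_all add: MV_def of01_def ones_def)
  have h26: "\<not> (q 0 < q 1 \<and> q 1 < q 4)" by (rule bt'[of 3]) (simp_all add: MV_def of01_def ones_def)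
  have h27: "\<not> (q 0 < q 2 \<and> q 2 < q 4)" by (rule bt'[of 3]) (simp_all add: MV_def of01_def ones_def)
  have h28: "\<not> (q 3 < q 1 \<and> q 1 < q 0)" by (rule bt'[of 3]) (simp_all add: MV_def of01_def ones_def)
  have h29: "\<not> (q 3 < q 2 \<and> q 2 < q 0)" by (rule bt'[of 3]) (simp_all add: MV_def of01_def ones_def)
  have h30: "\<not> (q 3 < q 1 \<and> q 1 < q 4)" by (rule bt'[of 3]) (simp_all add: MV_def of01_def ones_def)
  have h31: "\<not> (q 3 < q 2 \<and> q 2 < q 4)" by (rule bt'[of 3]) (simp_all add: MV_def of01_def ones_def)
  have h32: "\<not> (q 4 < q 1 \<and> q 1 < q 0)" by (rule bt'[of 3]) (simp_all add: MV_def of01_def ones_def)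
  have h33: "\<not> (q 4 < q 2 \<and> q 2 < q 0)" by (rule bt'[of 3]) (simp_all add: MV_def of01_def ones_def)
  have h34: "\<not> (q 4 < q 1 \<and> q 1 < q 3)" by (rule bt'[of 3]) (simp_all add: MV_def of01_def ones_def)
  have h35: "\<not> (q 4 < q 2 \<and> q 2 < q 3)" by (rule bt'[of 3]) (simp_all add: MV_def of01_def ones_def)
  have d0: "q 0 \<noteq> q 1" by (rule d) (simp_all add: MV_def of01_def)
  have d1: "q 0 \<noteq> q 2" by (rule d) (simp_all add: MV_def of01_def)
  have d2: "q 0 \<noteq> q 3" by (rule d) (simp_all add: MV_def of01_def)
  have d3: "q 0 \<noteq> q 4" by (rule d) (simp_all add: MV_def of01_def)
  have d4: "q 1 \<noteq> q 2" by (rule d) (simp_all add: MV_def of01_def)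
  have d5: "q 1 \<noteq> q 3" by (rule d) (simp_all add: MV_def of01_def)
  have d6: "q 1 \<noteq> q 4" by (rule d) (simp_all add: MV_def of01_def)
  have d7: "q 2 \<noteq> q 3" by (rule d) (simp_all add: MV_def of01_def)
  have d8: "q 2 \<noteq> q 4" by (rule d) (simp_all add: MV_def of01_def)
  have d9: "q 3 \<noteq> q 4" by (rule d) (simp_all add: MV_def of01_def)
  show False
    apply (insert h0 h1 h2 h3 h4 h5 h6 h7 h8 h9 h10 h11 h12 h13 h14 h15 h16 h17 h18 h19 h20 h21 h22 h23 h24 h25 h26 h27 h28 h29 h30 h31 h32 h33 h34 h35)
    apply (rule neqc[OF d0]; rule neqc[OF d1]; rule neqc[OF d2]; rule neqc[OF d3]; rule neqc[OF d4]; rule neqc[OF d5]; rule neqc[OF d6]; rule neqc[OF d7]; rule neqc[OF d8]; rule neqc[OF d9])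
    apply (blast | linarith)+
    done
qed

lemma S0_len: "k \<ge> 1 \<Longrightarrow> length (rows (S0 k)) = k + 1"
  by (simp add: S0_def)

lemma S0_ncols: "ncols (S0 k) = k"
  by (simp add: S0_def)

lemma S0_mid: "1 \<le> j \<Longrightarrow> j < k \<Longrightarrow> ones (rows (S0 k) ! j) = {j - 1, j}"
proof -
  assume j: "1 \<le> j" "j < k"
  then obtain i where i: "j = Suc i" by (cases j) auto
  have "i < k - 1" using j i by simp
  have "rows (S0 k) ! j = (map (\<lambda>j. ({j - 1, j}, None, None)) [1..<k] @ [({0, k - 1}, None, None)]) ! i"
    by (simp add: S0_def i)
  also have "\<dots> = ({j - 1, j}, None, None)" using j i \<open>i < k - 1\<close> by (simp add: nth_append)
  finally show ?thesis by (simp add: ones_def)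
qed

lemma S0_last: "1 \<le> k \<Longrightarrow> ones (rows (S0 k) ! k) = {0, k - 1}"
proof -
  assume k: "1 \<le> k"
  then obtain i where i: "k = Suc i" by (cases k) auto
  have "rows (S0 k) ! k = (map (\<lambda>j. ({j - 1, j}, None, None)) [1..<k] @ [({0, k - 1}, None, None)]) ! i"
    by (simp add: S0_def i)
  also have "\<dots> = ({0, k - 1}, None, None)" using k i by (simp add: nth_append)
  finally show ?thesis by (simp add: ones_def)
qed

lemma S0_lab: "k \<ge> 1 \<Longrightarrow> i < length (rows (S0 k)) \<Longrightarrow> lab (rows (S0 k) ! i) = None"
  by (auto simp: S0_def lab_def nth_append nth_Cons split: nat.splits)

lemma nb:
  assumes bt: "BT B q" and inj: "inj_on q {0..<ncols B}"
    and i: "i < length (rows B)" and i': "i' < length (rows B)"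
    and oi: "ones (rows B ! i) = {m, a}" and oi': "ones (rows B ! i') = {m, b}"
    and d: "a \<noteq> b" "m \<noteq> a" "m \<noteq> b" and lt: "m < ncols B" "a < ncols B" "b < ncols B"
    and mn: "\<forall>c<ncols B. q m \<le> q c"
  shows False
proof -
  have qab: "q a \<noteq> q b" "q m \<noteq> q a" "q m \<noteq> q b"
    using inj_onD[OF inj, of a b] inj_onD[OF inj, of m a] inj_onD[OF inj, of m b] d lt by auto
  then have ma: "q m < q a" and mb: "q m < q b" using mn lt by (auto simp: le_less)
  show False
  proof (cases "q a < q b")
    case True
    have "a \<in> ones (rows B ! i')"
      using bt i' lt True ma oi' unfolding BT_def by blast
    then show False using oi' d by auto
  next
    case False
    then have "q b < q a" using qab by auto
    have "b \<in> ones (rows B ! i)"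
      using bt i lt \<open>q b < q a\<close> mb oi unfolding BT_def by blast
    then show False using oi d by auto
  qed
qed

lemma no_S0:
  assumes k: "k \<ge> 3" and inj: "inj_on q {0..<ncols (S0 k)}" and bt: "BT (S0 k) q"
  shows False
proof -
  have "\<exists>x. x < k \<and> (\<forall>y. y < k \<longrightarrow> q x \<le> q y)"
    using ex_has_least_nat[of "\<lambda>x. x < k" 0 q] k by auto
  then obtain m where m: "m < k" and mn: "\<forall>c<ncols (S0 k). q m \<le> q c"
    by (auto simp: S0_ncols)
  have len: "length (rows (S0 k)) = k + 1" using k S0_len by auto
  have kk: "k - 1 < k + 1" "k < k + 1" "1 < k + 1" "k - 1 < k" "k - 2 < k" "1 < k" using k by auto
  show False
  proof (cases "m = 0")
    case True
    have o1: "ones (rows (S0 k) ! 1) = {m, 1}" using S0_mid[of 1 k] k True by simp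
    have o2: "ones (rows (S0 k) ! k) = {m, k - 1}" using S0_last[of k] k True by simp
    show False
      by (rule nb[OF bt inj _ _ o1 o2]) (use k True mn in \<open>auto simp: len S0_ncols\<close>)
  next
    case False
    show False
    proof (cases "m = k - 1")
      case True
      have o1: "ones (rows (S0 k) ! (k - 1)) = {m, k - 2}"
        using S0_mid[of "k - 1" k] k True by (auto simp: insert_commute numeral_2_eq_2)
      have o2: "ones (rows (S0 k) ! k) = {m, 0}"
        using S0_last[of k] k True by (auto simp: insert_commute)
      show False
        by (rule nb[OF bt inj _ _ o1 o2]) (use k True mn in \<open>auto simp: len S0_ncols\<close>)
    next
      case False2: False
      have o1: "ones (rows (S0 k) ! m) = {m, m - 1}"
        using S0_mid[of m k] k m False by (auto simp: insert_commute)
      have o2: "ones (rows (S0 k) ! (m + 1)) = {m, m + 1}"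
        using S0_mid[of "m + 1" k] k m False2 by auto
      show False
        by (rule nb[OF bt inj _ _ o1 o2]) (use k m False False2 mn in \<open>auto simp: len S0_ncols\<close>)
    qed
  qed
qed

theorem mainTheorem2:
  assumes "enriched A"
    and "\<exists>p. suitable_LR_ordering A p"
  shows "\<not> subconf M0 A \<and> \<not> subconf MII4 A \<and> \<not> subconf MV A \<and>
         (\<forall>k::nat. even k \<and> k \<ge> 4 \<longrightarrow> \<not> subconf (S0 k) A)"
proof -
  from assms(2) obtain p where "LR_ordering A p" unfolding suitable_LR_ordering_def by blast
  note tr = transfer[OF this]
  have "\<not> subconf M0 A"
  proof
    assume "subconf M0 A"
    moreover have "\<forall>i<length (rows M0). lab (rows M0 ! i) = None"
      by (auto simp: M0_def of01_def lab_def less_Suc_eq numeral_eq_Suc)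
    ultimately show False using tr no_M0 by blast
  qed
  moreover have "\<not> subconf MII4 A"
  proof
    assume "subconf MII4 A"
    moreover have "\<forall>i<length (rows MII4). lab (rows MII4 ! i) = None"
      by (auto simp: MII4_def of01_def lab_def less_Suc_eq numeral_eq_Suc)
    ultimately show False using tr no_MII4 by blast
  qed
  moreover have "\<not> subconf MV A"
  proof
    assume "subconf MV A"
    moreover have "\<forall>i<length (rows MV). lab (rows MV ! i) = None"
      by (auto simp: MV_def of01_def lab_def less_Suc_eq numeral_eq_Suc)
    ultimately show False using tr no_MV by blast
  qed
  moreover have "\<forall>k::nat. even k \<and> k \<ge> 4 \<longrightarrow> \<not> subconf (S0 k) A"
  proof (intro allI impI notI)
    fix k :: nat
    assume k: "even k \<and> k \<ge> 4" and "subconf (S0 k) A"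
    moreover have "\<forall>i<length (rows (S0 k)). lab (rows (S0 k) ! i) = None"
      using S0_lab k by auto
    ultimately obtain q where "inj_on q {0..<ncols (S0 k)}" "BT (S0 k) q" using tr by blast
    then show False using no_S0[of k q] k by auto
  qed
  ultimately show ?thesis by blast
qed

end
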